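(* Let $j\ge2$, $\lambda\in I_j$, $\theta\in(\mathbb R^d)^{j-1}$. (i) If $d=1$ and $\frac12<\alpha<2$, then $E[S_1^{-1/2}L^{(\alpha)}_j(\lambda,\theta)]<\infty$. (ii) If $d=1$ and $\frac32<\alpha<2$, or $d=2$ and $1<\alpha<2$, or $d=3$ and $\frac12<\alpha<2$, then $E[S_1^{-d/2}\{L^{(\alpha)}_j(\lambda,\theta)\}^2]<\infty$.
   Context: $\{S_t\}$ is the $\alpha/2$-stable subordinator ($S_0=0$, nondecreasing, stationary independent increments, $Ee^{-\lambda S_t}=e^{-t\lambda^{\alpha/2}}$). $I_j=\{0<\lambda_j<\dots<\lambda_1<1\}$; for $\lambda\in I_j$, $S^*_{\lambda_k-\lambda_{k+1}}=S_{\lambda_k-\lambda_j}-S_{\lambda_{k+1}-\lambda_j}$ ($1\le k\le j-1$). For $\theta=(\theta_1,\dots,\theta_{j-1})\in(\mathbb R^d)^{j-1}$, $\gamma_k=\theta_1+\dots+\theta_k$ and $L^{(\alpha)}_j(\lambda,\theta)=\sum_{k=1}^{j-1}S^*_{\lambda_k-\lambda_{k+1}}|\gamma_k|^2-S_1^{-1}|\sum_{k=1}^{j-1}S^*_{\lambda_k-\lambda_{k+1}}\gamma_k|^2$. *)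

theory Defs
  imports "HOL-Probability.Probability"
begin

text \<open>An (beta)-stable subordinator on a probability space M, with Laplace exponent
  E exp(-l S_t) = exp(-t l^beta).  In the paper beta = alpha/2.\<close>
definition stable_subordinator :: "'w measure \<Rightarrow> (real \<Rightarrow> 'w \<Rightarrow> real) \<Rightarrow> real \<Rightarrow> bool" where
  "stable_subordinator M S \<beta> \<longleftrightarrow>
     prob_space M \<and>
     (\<forall>t\<ge>0. S t \<in> borel_measurable M) \<and>
     (\<forall>\<omega>\<in>space M. S 0 \<omega> = 0 \<and> mono_on {0..} (\<lambda>t. S t \<omega>)) \<and>
     (\<forall>s t. 0 \<le> s \<longrightarrow> s \<le> t \<longrightarrow>
        distr M borel (\<lambda>\<omega>. S t \<omega> - S s \<omega>) = distr M borel (S (t - s))) \<and>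
     (\<forall>(n::nat) (\<tau>::nat \<Rightarrow> real). 0 \<le> \<tau> 0 \<longrightarrow> (\<forall>i<n. \<tau> i \<le> \<tau> (Suc i)) \<longrightarrow>
        prob_space.indep_vars M (\<lambda>_. borel) (\<lambda>i \<omega>. S (\<tau> (Suc i)) \<omega> - S (\<tau> i) \<omega>) {..<n}) \<and>
     (\<forall>t\<ge>0. \<forall>l\<ge>0. prob_space.expectation M (\<lambda>\<omega>. exp (- l * S t \<omega>)) = exp (- t * l powr \<beta>))"

definition I_set :: "nat \<Rightarrow> (nat \<Rightarrow> real) set" where
  "I_set j = {lam. 0 < lam j \<and> lam 1 < 1 \<and> (\<forall>k\<in>{1..<j}. lam (Suc k) < lam k)}"

text \<open>S*_{lam_k - lam_{k+1}} = S_{lam_k - lam_j} - S_{lam_{k+1} - lam_j}.\<close>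
definition Sstar :: "(real \<Rightarrow> 'w \<Rightarrow> real) \<Rightarrow> nat \<Rightarrow> (nat \<Rightarrow> real) \<Rightarrow> nat \<Rightarrow> 'w \<Rightarrow> real" where
  "Sstar S j lam k \<omega> = S (lam k - lam j) \<omega> - S (lam (Suc k) - lam j) \<omega>"

definition gam :: "(nat \<Rightarrow> 'v::real_vector) \<Rightarrow> nat \<Rightarrow> 'v" where
  "gam \<theta> k = (\<Sum>i=1..k. \<theta> i)"

definition Lalpha :: "(real \<Rightarrow> 'w \<Rightarrow> real) \<Rightarrow> nat \<Rightarrow> (nat \<Rightarrow> real) \<Rightarrow> (nat \<Rightarrow> real^'d) \<Rightarrow> 'w \<Rightarrow> real" where
  "Lalpha S j lam \<theta> \<omega> =
     (\<Sum>k=1..<j. Sstar S j lam k \<omega> * (norm (gam \<theta> k))\<^sup>2)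
     - inverse (S 1 \<omega>) * (norm (\<Sum>k=1..<j. Sstar S j lam k \<omega> *\<^sub>R gam \<theta> k))\<^sup>2"

end

theory Submission
  imports Defs
begin


lemma aux13: "1/3 \<le> (1::real) - a \<Longrightarrow> 1 \<le> 3*(1-a)" by (simp add: algebra_simps)

lemma pw_pow_bound:
  fixes x q :: real
  assumes "0 \<le> x" "0 < q"
  shows "ennreal (x powr q) \<le> 1 + (\<Sum>n. ennreal (3 * (2 powr q)^n * (1 - exp (- ((1/2)^n) * x))))"
proof (cases "x \<le> 1")
  case True
  have "x powr q \<le> 1" using True assms
    using powr_mono2[of q x 1] by simp
  hence "ennreal (x powr q) \<le> 1" by (simp add: ennreal_le_1)
  also have "\<dots> \<le> 1 + (\<Sum>n. ennreal (3 * (2 powr q)^n * (1 - exp (- ((1/2)^n) * x))))" by simp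
  finally show ?thesis .
next
  case False
  have "\<exists>n. x \<le> (2::real)^n" using real_arch_pow[of 2 x] by (auto intro: less_imp_le)
  define n where "n = (LEAST n. x \<le> (2::real)^n)"
  have xn: "x \<le> 2^n" unfolding n_def by (rule LeastI_ex) fact
  have n0: "n \<noteq> 0" proof assume "n = 0" thus False using xn False by simp qed
  have "\<not> x \<le> 2^(n-1)" unfolding n_def using n0 not_less_Least[of "n-1" "\<lambda>n. x \<le> (2::real)^n"] n_def by auto
  hence lt: "2^n < 2*x" using n0 by (cases n) auto
  have pos: "(0::real) < 2^n" by simp
  have "(1/2)^n * x = x / 2^n" by (simp add: power_one_over)
  also have "\<dots> > 1/2" using lt pos by (simp add: field_simps)
  finally have h: "(1/2)^n * x > 1/2" .
  have e: "exp (-(1/2::real)) \<le> 2/3"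
  proof -
    have "1 + 1/2 \<le> exp (1/2::real)" using exp_ge_add_one_self[of "1/2"] by simp
    thus ?thesis by (simp add: exp_minus field_simps)
  qed
  have "exp (- ((1/2)^n) * x) \<le> exp (-(1/2::real))" using h by simp
  hence h2: "1 - exp (- ((1/2)^n) * x) \<ge> 1/3" using e by linarith
  have "x powr q \<le> (2^n) powr q" using xn assms by (simp add: powr_mono2)
  also have "\<dots> = (2 powr q)^n" by (simp add: powr_power powr_realpow[symmetric] powr_powr mult.commute)
  finally have h3: "x powr q \<le> (2 powr q)^n" .
  have "x powr q \<le> 3 * (2 powr q)^n * (1 - exp (- ((1/2)^n) * x))"
  proof -
    have c: "0 \<le> (2 powr q::real)^n" by simp
    have h2': "1 \<le> 3 * (1 - exp (- ((1/2)^n) * x))" by (rule aux13[OF h2])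
    have "(2 powr q)^n * 1 \<le> (2 powr q)^n * (3 * (1 - exp (- ((1/2)^n) * x)))"
      by (rule mult_left_mono[OF h2' c])
    hence "(2 powr q)^n \<le> 3 * (2 powr q)^n * (1 - exp (- ((1/2)^n) * x))"
      by (simp only: mult.right_neutral mult.assoc mult.left_commute)
    thus ?thesis using h3 by linarith
  qed
  hence "ennreal (x powr q) \<le> ennreal (3 * (2 powr q)^n * (1 - exp (- ((1/2)^n) * x)))"
    by (rule ennreal_leI)
  also have "\<dots> \<le> (\<Sum>n. ennreal (3 * (2 powr q)^n * (1 - exp (- ((1/2)^n) * x))))"
    using sum_le_suminf[of "\<lambda>n. ennreal (3 * (2 powr q)^n * (1 - exp (- ((1/2)^n) * x)))" "{n}"]
    by simp
  also have "\<dots> \<le> 1 + \<dots>" by simp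
  finally show ?thesis .
qed

lemma moment_finite:
  fixes X :: "'w \<Rightarrow> real"
  assumes P: "prob_space M" and Xm: "X \<in> borel_measurable M"
    and X0: "\<And>\<omega>. \<omega> \<in> space M \<Longrightarrow> 0 \<le> X \<omega>"
    and L: "\<And>l. l \<ge> 0 \<Longrightarrow> prob_space.expectation M (\<lambda>\<omega>. exp (- l * X \<omega>)) = exp (- t * l powr \<beta>)"
    and t: "0 \<le> t" and q: "0 < q" "q < \<beta>"
  shows "(\<integral>\<^sup>+\<omega>. ennreal (X \<omega> powr q) \<partial>M) < \<infinity>"
proof -
  interpret prob_space M by (rule P)
  define r where "r = (2::real) powr (q - \<beta>)"
  have r0: "0 < r" "r < 1" using q unfolding r_def by (auto intro: powr_less_one)
  define f where "f n \<omega> = ennreal (3 * (2 powr q)^n * (1 - exp (- ((1/2)^n) * X \<omega>)))" for n \<omega>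
  have fm: "f n \<in> borel_measurable M" for n unfolding f_def using Xm by measurable
  have tm: "integral\<^sup>N M (f n) \<le> ennreal (3 * t * r^n)" for n
  proof -
    define l :: real where "l = (1/2)^n"
    have l0: "0 \<le> l" unfolding l_def by simp
    have int: "integrable M (\<lambda>\<omega>. 1 - exp (- l * X \<omega>))"
    proof (rule integrable_const_bound[where B=1])
      show "AE x in M. norm (1 - exp (- l * X x)) \<le> 1"
      proof (rule AE_I2)
        fix x assume "x \<in> space M"
        hence "0 \<le> l * X x" using X0 l0 by simp
        hence "exp (- l * X x) \<le> 1" "0 < exp (- l * X x)" by auto
        thus "norm (1 - exp (- l * X x)) \<le> 1" by simp
      qed
      show "(\<lambda>\<omega>. 1 - exp (- l * X \<omega>)) \<in> borel_measurable M" using Xm by measurable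
    qed
    have nn: "(\<integral>\<^sup>+\<omega>. ennreal (1 - exp (- l * X \<omega>)) \<partial>M) = ennreal (expectation (\<lambda>\<omega>. 1 - exp (- l * X \<omega>)))"
      by (rule nn_integral_eq_integral[OF int]) (use X0 l0 in \<open>auto intro!: AE_I2 simp: mult_nonneg_nonneg\<close>)
    have int2: "integrable M (\<lambda>\<omega>. exp (- l * X \<omega>))"
    proof (rule integrable_const_bound[where B=1])
      show "AE x in M. norm (exp (- l * X x)) \<le> 1"
        using X0 l0 by (auto intro!: AE_I2 simp: mult_nonneg_nonneg)
      show "(\<lambda>\<omega>. exp (- l * X \<omega>)) \<in> borel_measurable M" using Xm by measurable
    qed
    have "expectation (\<lambda>\<omega>. 1 - exp (- l * X \<omega>)) = 1 - exp (- t * l powr \<beta>)"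
      using L[OF l0] int2 by (simp add: prob_space)
    also have "\<dots> \<le> t * l powr \<beta>" using exp_ge_add_one_self[of "- t * l powr \<beta>"] by simp
    finally have E: "expectation (\<lambda>\<omega>. 1 - exp (- l * X \<omega>)) \<le> t * l powr \<beta>" .
    have "integral\<^sup>N M (f n) = ennreal (3 * (2 powr q)^n) * (\<integral>\<^sup>+\<omega>. ennreal (1 - exp (- l * X \<omega>)) \<partial>M)"
    proof -
      have "integral\<^sup>N M (f n) = (\<integral>\<^sup>+\<omega>. ennreal (3 * (2 powr q)^n) * ennreal (1 - exp (- l * X \<omega>)) \<partial>M)"
      proof (rule nn_integral_cong)
        fix x assume "x \<in> space M"
        hence "0 \<le> l * X x" using X0 l0 by simp
        hence "0 \<le> 1 - exp (- l * X x)" by simp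
        thus "f n x = ennreal (3 * (2 powr q)^n) * ennreal (1 - exp (- l * X x))"
          unfolding f_def l_def by (simp add: ennreal_mult)
      qed
      also have "\<dots> = ennreal (3 * (2 powr q)^n) * (\<integral>\<^sup>+\<omega>. ennreal (1 - exp (- l * X \<omega>)) \<partial>M)"
        by (rule nn_integral_cmult) (use Xm in measurable)
      finally show ?thesis .
    qed
    also have "\<dots> \<le> ennreal (3 * (2 powr q)^n) * ennreal (t * l powr \<beta>)"
      unfolding nn by (intro mult_left_mono ennreal_leI E) auto
    also have "\<dots> = ennreal (3 * t * ((2 powr q)^n * l powr \<beta>))"
      using t by (subst ennreal_mult[symmetric]) (auto simp: mult_ac)
    also have "(2 powr q)^n * l powr \<beta> = r^n"
      unfolding l_def r_def
      by (simp add: powr_power powr_realpow[symmetric] powr_powr powr_divide powr_diff field_simps powr_minus)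
    finally show ?thesis by simp
  qed
  have "(\<integral>\<^sup>+\<omega>. ennreal (X \<omega> powr q) \<partial>M) \<le> (\<integral>\<^sup>+\<omega>. 1 + (\<Sum>n. f n \<omega>) \<partial>M)"
  proof (rule nn_integral_mono)
    fix x assume "x \<in> space M"
    show "ennreal (X x powr q) \<le> 1 + (\<Sum>n. f n x)"
      unfolding f_def by (rule pw_pow_bound[OF X0[OF \<open>x \<in> space M\<close>] q(1)])
  qed
  also have "\<dots> = 1 + (\<Sum>n. integral\<^sup>N M (f n))"
    by (subst nn_integral_add) (auto simp: nn_integral_suminf fm emeasure_space_1 intro!: borel_measurable_suminf_order)
  also have "\<dots> \<le> 1 + (\<Sum>n. ennreal (3 * t * r^n))"
    by (intro add_left_mono suminf_le tm) auto
  also have "(\<Sum>n. ennreal (3 * t * r^n)) = ennreal (\<Sum>n. 3 * t * r^n)"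
    by (rule suminf_ennreal2) (use t r0 in \<open>auto intro!: summable_mult summable_geometric\<close>)
  finally have fin: "(\<integral>\<^sup>+\<omega>. ennreal (X \<omega> powr q) \<partial>M) \<le> 1 + ennreal (\<Sum>n. 3 * t * r^n)" .
  have "1 + ennreal (\<Sum>n. 3 * t * r^n) < \<top>" by (simp add: less_top[symmetric])
  with fin show ?thesis unfolding infinity_ennreal_def by (rule le_less_trans)
qed



lemma core_identity:
  fixes x :: "'i \<Rightarrow> real" and h :: "'i \<Rightarrow> 'v::real_inner"
  shows "(\<Sum>a\<in>I. \<Sum>b\<in>I. x a * x b * (norm (h a - h b))\<^sup>2)
     = 2 * (\<Sum>i\<in>I. x i) * (\<Sum>i\<in>I. x i * (norm (h i))\<^sup>2) - 2 * (norm (\<Sum>i\<in>I. x i *\<^sub>R h i))\<^sup>2"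
proof -
  have e1: "(norm (h a - h b))\<^sup>2 = (norm (h a))\<^sup>2 + (norm (h b))\<^sup>2 - 2 * inner (h a) (h b)" for a b
    by (simp add: power2_norm_eq_inner inner_diff_left inner_diff_right inner_commute)
  have e2: "(norm (\<Sum>i\<in>I. x i *\<^sub>R h i))\<^sup>2 = (\<Sum>a\<in>I. \<Sum>b\<in>I. x a * x b * inner (h a) (h b))"
    by (simp add: power2_norm_eq_inner inner_sum_left inner_sum_right sum_distrib_left mult_ac inner_commute)
  have "(\<Sum>a\<in>I. \<Sum>b\<in>I. x a * x b * (norm (h a - h b))\<^sup>2)
     = (\<Sum>a\<in>I. \<Sum>b\<in>I. (x a * (norm (h a))\<^sup>2) * x b + x a * (x b * (norm (h b))\<^sup>2) - 2 * (x a * x b * inner (h a) (h b)))"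
    unfolding e1 by (intro sum.cong refl) (simp add: algebra_simps)
  also have "\<dots> = (\<Sum>a\<in>I. \<Sum>b\<in>I. (x a * (norm (h a))\<^sup>2) * x b) + (\<Sum>a\<in>I. \<Sum>b\<in>I. x a * (x b * (norm (h b))\<^sup>2)) - 2 * (\<Sum>a\<in>I. \<Sum>b\<in>I. x a * x b * inner (h a) (h b))"
    by (simp only: sum.distrib sum_subtractf sum_distrib_left[symmetric])
  also have "(\<Sum>a\<in>I. \<Sum>b\<in>I. (x a * (norm (h a))\<^sup>2) * x b) = (\<Sum>i\<in>I. x i * (norm (h i))\<^sup>2) * (\<Sum>i\<in>I. x i)"
    by (rule sum_product[symmetric])
  also have "(\<Sum>a\<in>I. \<Sum>b\<in>I. x a * (x b * (norm (h b))\<^sup>2)) = (\<Sum>i\<in>I. x i) * (\<Sum>i\<in>I. x i * (norm (h i))\<^sup>2)"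
    by (rule sum_product[symmetric])
  also have "(\<Sum>i\<in>I. x i * (norm (h i))\<^sup>2) * (\<Sum>i\<in>I. x i) + (\<Sum>i\<in>I. x i) * (\<Sum>i\<in>I. x i * (norm (h i))\<^sup>2) - 2 * (\<Sum>a\<in>I. \<Sum>b\<in>I. x a * x b * inner (h a) (h b)) = 2 * (\<Sum>i\<in>I. x i) * (\<Sum>i\<in>I. x i * (norm (h i))\<^sup>2) - 2 * (\<Sum>a\<in>I. \<Sum>b\<in>I. x a * x b * inner (h a) (h b))"
    by (simp add: algebra_simps)
  finally show ?thesis unfolding e2 .
qed

lemma core_bound:
  fixes x :: "'i \<Rightarrow> real" and h :: "'i \<Rightarrow> 'v::real_inner"
  assumes fin: "finite I" and x0: "\<And>i. i \<in> I \<Longrightarrow> 0 \<le> x i" and hG: "\<And>i. i \<in> I \<Longrightarrow> (norm (h i))\<^sup>2 \<le> G"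
    and s: "s = (\<Sum>i\<in>I. x i)"
    and L: "L = (\<Sum>i\<in>I. x i * (norm (h i))\<^sup>2) - inverse s * (norm (\<Sum>i\<in>I. x i *\<^sub>R h i))\<^sup>2"
  shows "0 \<le> L \<and> s * L \<le> 2 * G * (\<Sum>a\<in>I. \<Sum>b\<in>I. if a = b then 0 else x a * x b)"
proof (cases "s = 0")
  case True
  hence xz: "\<And>i. i \<in> I \<Longrightarrow> x i = 0" using s x0 fin sum_nonneg_eq_0_iff by metis
  have "L = 0" unfolding L using xz by simp
  moreover have "(\<Sum>a\<in>I. \<Sum>b\<in>I. if a = b then 0 else x a * x b) = 0"
    by (intro sum.neutral ballI) (simp add: xz)
  ultimately show ?thesis using True by simp
next
  case False
  have s0: "0 < s" using False s x0 by (metis order_le_neq_trans sum_nonneg)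
  define Q where "Q = (\<Sum>a\<in>I. \<Sum>b\<in>I. x a * x b * (norm (h a - h b))\<^sup>2)"
  have sL: "s * L = Q / 2"
    unfolding Q_def core_identity L using s0 s by (simp add: field_simps)
  have Q0: "0 \<le> Q" unfolding Q_def using x0 by (intro sum_nonneg) auto
  have "Q \<le> (\<Sum>a\<in>I. \<Sum>b\<in>I. 4 * G * (if a = b then 0 else x a * x b))"
    unfolding Q_def
  proof (intro sum_mono)
    fix a b assume a: "a \<in> I" and b: "b \<in> I"
    show "x a * x b * (norm (h a - h b))\<^sup>2 \<le> 4 * G * (if a = b then 0 else x a * x b)"
    proof (cases "a = b")
      case False
      have "(norm (h a - h b))\<^sup>2 \<le> 2 * (norm (h a))\<^sup>2 + 2 * (norm (h b))\<^sup>2"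
      proof -
        have "(norm (h a - h b))\<^sup>2 + (norm (h a + h b))\<^sup>2 = 2 * (norm (h a))\<^sup>2 + 2 * (norm (h b))\<^sup>2"
          by (simp add: power2_norm_eq_inner inner_diff_left inner_diff_right inner_add_left inner_add_right inner_commute)
        thus ?thesis by (smt (verit) zero_le_power2)
      qed
      also have "\<dots> \<le> 4 * G" using hG[OF a] hG[OF b] by simp
      finally have "(norm (h a - h b))\<^sup>2 \<le> 4 * G" .
      moreover have "0 \<le> x a * x b" using x0 a b by simp
      ultimately show ?thesis using False by (simp add: mult_left_mono mult.commute)
    qed simp
  qed
  also have "\<dots> = 4 * G * (\<Sum>a\<in>I. \<Sum>b\<in>I. if a = b then 0 else x a * x b)"
    by (simp add: sum_distrib_left)
  finally have "Q \<le> 4 * G * (\<Sum>a\<in>I. \<Sum>b\<in>I. if a = b then 0 else x a * x b)" .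
  hence "s * L \<le> 2 * G * (\<Sum>a\<in>I. \<Sum>b\<in>I. if a = b then 0 else x a * x b)" using sL by simp
  moreover have "0 \<le> L"
  proof -
    have "0 \<le> s * L" using sL Q0 by simp
    thus ?thesis using s0 by (simp add: zero_le_mult_iff)
  qed
  ultimately show ?thesis by simp
qed

lemma prod_powr_split:
  fixes u v s m p :: real
  assumes "0 \<le> u" "u \<le> s" "0 \<le> v" "v \<le> s" "0 \<le> p" "p \<le> m" "0 < m"
  shows "(u * v) powr m \<le> (u powr p * v powr p) * s powr (2 * (m - p))"
proof (cases "u * v = 0")
  case True
  hence "(u * v) powr m = 0" by simp
  moreover have "0 \<le> (u powr p * v powr p) * s powr (2 * (m - p))" by simp
  ultimately show ?thesis by (simp only:)
next
  case False
  hence uv: "0 < u * v" using assms by (simp add: less_le)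
  have "(u * v) powr m = (u * v) powr p * (u * v) powr (m - p)"
    by (simp add: powr_add[symmetric])
  also have "(u * v) powr (m - p) \<le> (s * s) powr (m - p)"
    using assms uv by (intro powr_mono2 mult_mono) auto
  also have "(s * s) powr (m - p) = s powr (2 * (m - p))"
  proof -
    have s0: "0 \<le> s" using assms by simp
    have "(s * s) powr (m - p) = s powr (m - p) * s powr (m - p)" using s0 by (simp add: powr_mult)
    also have "\<dots> = s powr ((m - p) + (m - p))" by (rule powr_add[symmetric])
    also have "(m - p) + (m - p) = 2 * (m - p)" by simp
    finally show ?thesis .
  qed
  finally show ?thesis using assms uv
    by (simp add: powr_mult mult_left_mono)
qed

lemma pw_bound1:
  fixes x :: "'i \<Rightarrow> real"
  assumes fin: "finite I" and x0: "\<And>i. i \<in> I \<Longrightarrow> 0 \<le> x i" and s: "s = (\<Sum>i\<in>I. x i)"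
    and G: "0 \<le> G" and L0: "0 \<le> L"
    and sL: "s * L \<le> 2 * G * (\<Sum>a\<in>I. \<Sum>b\<in>I. if a = b then 0 else x a * x b)"
  shows "s powr (-1/2) * L \<le> 2 * G * (\<Sum>a\<in>I. \<Sum>b\<in>I. if a = b then 0 else x a powr (1/4) * x b powr (1/4))"
proof (cases "s = 0")
  case True
  have "0 \<le> (\<Sum>a\<in>I. \<Sum>b\<in>I. if a = b then 0 else x a powr (1/4) * x b powr (1/4))"
    by (intro sum_nonneg) auto
  thus ?thesis using True G by simp
next
  case False
  have s0: "0 < s" using False s x0 by (metis order_le_neq_trans sum_nonneg)
  have xs: "x i \<le> s" if "i \<in> I" for i
    unfolding s by (rule member_le_sum) (use that x0 fin in auto)
  have "s powr (-1/2) * L = (s * L) / s powr (3/2)"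
    using s0 by (simp add: powr_minus_divide field_simps powr_add[symmetric] powr_mult_base)
  also have "\<dots> \<le> (2 * G * (\<Sum>a\<in>I. \<Sum>b\<in>I. if a = b then 0 else x a * x b)) / s powr (3/2)"
    using sL s0 by (simp add: divide_right_mono)
  also have "\<dots> = 2 * G * (\<Sum>a\<in>I. \<Sum>b\<in>I. if a = b then 0 else x a * x b / s powr (3/2))"
  proof -
    have e: "\<And>a b. (if a = b then 0 else x a * x b) / s powr (3/2) = (if a = b then 0 else x a * x b / s powr (3/2))"
      by simp
    show ?thesis by (simp only: e[symmetric] sum_divide_distrib[symmetric] times_divide_eq_right)
  qed
  also have "\<dots> \<le> 2 * G * (\<Sum>a\<in>I. \<Sum>b\<in>I. if a = b then 0 else x a powr (1/4) * x b powr (1/4))"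
  proof (intro mult_left_mono sum_mono)
    fix a b assume a: "a \<in> I" and b: "b \<in> I"
    have "(x a * x b) powr 1 \<le> (x a powr (1/4) * x b powr (1/4)) * s powr (2 * (1 - 1/4))"
      by (rule prod_powr_split) (use x0 xs a b in auto)
    hence "x a * x b \<le> (x a powr (1/4) * x b powr (1/4)) * s powr (3/2)"
      using x0[OF a] x0[OF b] by (simp add: mult_nonneg_nonneg)
    hence "x a * x b / s powr (3/2) \<le> x a powr (1/4) * x b powr (1/4)"
      using s0 by (simp add: divide_le_eq)
    thus "(if a = b then 0 else x a * x b / s powr (3/2)) \<le> (if a = b then 0 else x a powr (1/4) * x b powr (1/4))"
      by simp
  qed (use G in auto)
  finally show ?thesis .
qed

lemma pw_bound2:
  fixes x :: "'i \<Rightarrow> real"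
  assumes fin: "finite I" and x0: "\<And>i. i \<in> I \<Longrightarrow> 0 \<le> x i" and s: "s = (\<Sum>i\<in>I. x i)"
    and G: "0 \<le> G" and L0: "0 \<le> L"
    and sL: "s * L \<le> 2 * G * (\<Sum>a\<in>I. \<Sum>b\<in>I. if a = b then 0 else x a * x b)"
    and dd: "0 \<le> dd" "dd < 4"
  shows "s powr (- dd / 2) * L\<^sup>2 \<le> 4 * G\<^sup>2 * real (card I * card I) *
           (\<Sum>a\<in>I. \<Sum>b\<in>I. if a = b then 0 else x a powr ((4 - dd)/4) * x b powr ((4 - dd)/4))"
proof (cases "s = 0")
  case True
  have "0 \<le> (\<Sum>a\<in>I. \<Sum>b\<in>I. if a = b then 0 else x a powr ((4 - dd)/4) * x b powr ((4 - dd)/4))"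
    by (intro sum_nonneg) auto
  thus ?thesis using True G by simp
next
  case False
  define p where "p = (4 - dd) / 4"
  define N where "N = real (card I * card I)"
  have p: "0 \<le> p" "p \<le> 2" using dd unfolding p_def by auto
  have s0: "0 < s" using False s x0 by (metis order_le_neq_trans sum_nonneg)
  have xs: "x i \<le> s" if "i \<in> I" for i
    unfolding s by (rule member_le_sum) (use that x0 fin in auto)
  define q where "q a b = (if a = b then 0 else x a * x b)" for a b
  define Q where "Q = (\<Sum>a\<in>I. \<Sum>b\<in>I. q a b)"
  define Q2 where "Q2 = (\<Sum>a\<in>I. \<Sum>b\<in>I. (q a b)\<^sup>2)"
  have sL0: "0 \<le> s * L" using s0 L0 by simp
  have A0: "(s * L)\<^sup>2 \<le> (2 * G * Q)\<^sup>2"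
    using sL sL0 unfolding q_def Q_def by (intro power_mono) auto
  have A1: "(2 * G * Q)\<^sup>2 = 4 * G\<^sup>2 * Q\<^sup>2" by (simp add: power_mult_distrib)
  have CS: "Q\<^sup>2 \<le> N * Q2"
  proof -
    have h0: "Q\<^sup>2 \<le> (\<Sum>a\<in>I. (\<Sum>b\<in>I. q a b)\<^sup>2) * card I"
      unfolding Q_def by (rule sum_squared_le_sum_of_squares)
    have h1: "(\<Sum>a\<in>I. (\<Sum>b\<in>I. q a b)\<^sup>2) \<le> (\<Sum>a\<in>I. (\<Sum>b\<in>I. (q a b)\<^sup>2) * card I)"
      by (intro sum_mono sum_squared_le_sum_of_squares)
    have h2: "(\<Sum>a\<in>I. (\<Sum>b\<in>I. (q a b)\<^sup>2) * card I) = Q2 * card I"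
      unfolding Q2_def by (rule sum_distrib_right[symmetric])
    have h3: "(\<Sum>a\<in>I. (\<Sum>b\<in>I. q a b)\<^sup>2) * card I \<le> (Q2 * card I) * card I"
      using h1 unfolding h2 by (rule mult_right_mono) simp
    have h4: "(Q2 * card I) * card I = N * Q2" unfolding N_def by simp
    show ?thesis using h0 h3 unfolding h4 by (rule order_trans)
  qed
  have A: "(s * L)\<^sup>2 \<le> 4 * G\<^sup>2 * (N * Q2)"
    using A0 unfolding A1 by (rule order_trans) (rule mult_left_mono[OF CS], simp)
  define X where "X = s powr (dd / 2)"
  have X0: "0 < X" unfolding X_def using s0 by simp
  have e1: "2 * (2 - p) = 2 + dd / 2" unfolding p_def by (simp add: field_simps)
  have e2: "s powr (2 * (2 - p)) = s\<^sup>2 * X"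
    unfolding e1 X_def using s0 by (simp add: powr_add powr_numeral)
  have e3: "s powr (- dd / 2) = 1 / X"
  proof -
    have "- dd / 2 = - (dd / 2)" by simp
    thus ?thesis unfolding X_def by (simp add: powr_minus_divide)
  qed
  have spow: "s powr (- dd / 2) * L\<^sup>2 = (s * L)\<^sup>2 / s powr (2 * (2 - p))"
    unfolding e2 e3 using s0 X0 by (simp add: power_mult_distrib)
  have B: "(q a b)\<^sup>2 / s powr (2 * (2 - p)) \<le> (if a = b then 0 else x a powr p * x b powr p)"
    if a: "a \<in> I" and b: "b \<in> I" for a b
  proof (cases "a = b")
    case False
    have nn: "0 \<le> x a * x b" using x0[OF a] x0[OF b] by simp
    have pw2: "(x a * x b) powr 2 = (x a * x b)\<^sup>2"
    proof (cases "x a * x b = 0")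
      case True thus ?thesis by auto
    next
      case False thus ?thesis using nn by (simp add: powr_numeral)
    qed
    have "(x a * x b) powr 2 \<le> (x a powr p * x b powr p) * s powr (2 * (2 - p))"
      by (rule prod_powr_split) (use x0 xs a b p in auto)
    hence "(q a b)\<^sup>2 \<le> (x a powr p * x b powr p) * s powr (2 * (2 - p))"
      using False unfolding q_def pw2 by simp
    moreover have "0 < s powr (2 * (2 - p))" using s0 by simp
    ultimately show ?thesis using False by (simp add: divide_le_eq)
  qed (simp add: q_def)
  have "s powr (- dd / 2) * L\<^sup>2 \<le> (4 * G\<^sup>2 * (N * Q2)) / s powr (2 * (2 - p))"
    unfolding spow using A s0 by (intro divide_right_mono) auto
  also have "\<dots> = 4 * G\<^sup>2 * N * (Q2 / s powr (2 * (2 - p)))" by simp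
  also have "Q2 / s powr (2 * (2 - p)) = (\<Sum>a\<in>I. \<Sum>b\<in>I. (q a b)\<^sup>2 / s powr (2 * (2 - p)))"
    unfolding Q2_def by (simp add: sum_divide_distrib)
  also have "4 * G\<^sup>2 * N * \<dots> \<le> 4 * G\<^sup>2 * N * (\<Sum>a\<in>I. \<Sum>b\<in>I. if a = b then 0 else x a powr p * x b powr p)"
    using B unfolding N_def by (intro mult_left_mono sum_mono) auto
  finally show ?thesis unfolding p_def N_def .
qed


lemma reidx:
  fixes F :: "nat \<Rightarrow> 'a::comm_monoid_add"
  shows "(\<Sum>k\<in>{1..<j}. F k) = (\<Sum>i<j. if Suc i < j then F (j - Suc i) else 0)"
proof -
  have "(\<Sum>i<j. if Suc i < j then F (j - Suc i) else 0) = (\<Sum>i\<in>{i\<in>{..<j}. Suc i < j}. F (j - Suc i))"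
    by (rule sum.inter_filter[symmetric]) simp
  also have "{i\<in>{..<j}. Suc i < j} = {..<j - 1}" by auto
  also have "(\<Sum>i\<in>{..<j - 1}. F (j - Suc i)) = (\<Sum>k\<in>{1..<j}. F k)"
    by (rule sum.reindex_bij_witness[where i="\<lambda>k. j - Suc k" and j="\<lambda>i. j - Suc i"]) auto
  finally show ?thesis by simp
qed

lemma pair_sum_finite:
  fixes x :: "nat \<Rightarrow> 'w \<Rightarrow> real"
  assumes xm: "\<And>i. i < j \<Longrightarrow> x i \<in> borel_measurable M"
    and c: "0 \<le> c"
    and fin: "\<And>a b. a < j \<Longrightarrow> b < j \<Longrightarrow> a \<noteq> b \<Longrightarrow>
       (\<integral>\<^sup>+\<omega>. ennreal (x a \<omega> powr p) * ennreal (x b \<omega> powr p) \<partial>M) < \<infinity>"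
  shows "(\<integral>\<^sup>+\<omega>. ennreal (c * (\<Sum>a<j. \<Sum>b<j. if a = b then 0 else x a \<omega> powr p * x b \<omega> powr p)) \<partial>M) < \<infinity>"
proof -
  have "(\<integral>\<^sup>+\<omega>. ennreal (c * (\<Sum>a<j. \<Sum>b<j. if a = b then 0 else x a \<omega> powr p * x b \<omega> powr p)) \<partial>M)
      = (\<integral>\<^sup>+\<omega>. ennreal c * (\<Sum>a<j. \<Sum>b<j. ennreal (if a = b then 0 else x a \<omega> powr p * x b \<omega> powr p)) \<partial>M)"
    using c by (intro nn_integral_cong) (simp add: ennreal_mult sum_nonneg)
  also have "\<dots> = ennreal c * (\<integral>\<^sup>+\<omega>. (\<Sum>a<j. \<Sum>b<j. ennreal (if a = b then 0 else x a \<omega> powr p * x b \<omega> powr p)) \<partial>M)"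
    by (rule nn_integral_cmult) (use xm in measurable)
  also have "(\<integral>\<^sup>+\<omega>. (\<Sum>a<j. \<Sum>b<j. ennreal (if a = b then 0 else x a \<omega> powr p * x b \<omega> powr p)) \<partial>M)
      = (\<Sum>a<j. \<Sum>b<j. \<integral>\<^sup>+\<omega>. ennreal (if a = b then 0 else x a \<omega> powr p * x b \<omega> powr p) \<partial>M)"
  proof -
    have fm: "(\<lambda>\<omega>. ennreal (if a = b then 0 else x a \<omega> powr p * x b \<omega> powr p)) \<in> borel_measurable M"
      if "a < j" "b < j" for a b
    proof -
      have [measurable]: "x a \<in> borel_measurable M" "x b \<in> borel_measurable M" using xm that by auto
      show ?thesis by measurable
    qed
    have "(\<integral>\<^sup>+\<omega>. (\<Sum>a<j. \<Sum>b<j. ennreal (if a = b then 0 else x a \<omega> powr p * x b \<omega> powr p)) \<partial>M)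
       = (\<Sum>a<j. \<integral>\<^sup>+\<omega>. (\<Sum>b<j. ennreal (if a = b then 0 else x a \<omega> powr p * x b \<omega> powr p)) \<partial>M)"
      by (rule nn_integral_sum) (auto simp del: sum_ennreal intro!: borel_measurable_sum fm)
    also have "\<dots> = (\<Sum>a<j. \<Sum>b<j. \<integral>\<^sup>+\<omega>. ennreal (if a = b then 0 else x a \<omega> powr p * x b \<omega> powr p) \<partial>M)"
      by (intro sum.cong refl nn_integral_sum fm) auto
    finally show ?thesis .
  qed
  also have "ennreal c * (\<Sum>a<j. \<Sum>b<j. \<integral>\<^sup>+\<omega>. ennreal (if a = b then 0 else x a \<omega> powr p * x b \<omega> powr p) \<partial>M) < \<infinity>"
  proof -
    have "(\<integral>\<^sup>+\<omega>. ennreal (if a = b then 0 else x a \<omega> powr p * x b \<omega> powr p) \<partial>M) < \<infinity>"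
      if "a < j" "b < j" for a b
    proof (cases "a = b")
      case False
      have "(\<integral>\<^sup>+\<omega>. ennreal (if a = b then 0 else x a \<omega> powr p * x b \<omega> powr p) \<partial>M)
          = (\<integral>\<^sup>+\<omega>. ennreal (x a \<omega> powr p) * ennreal (x b \<omega> powr p) \<partial>M)"
        using False by (simp add: ennreal_mult)
      thus ?thesis using fin[OF that False] by simp
    qed simp
    hence "(\<Sum>a<j. \<Sum>b<j. \<integral>\<^sup>+\<omega>. ennreal (if a = b then 0 else x a \<omega> powr p * x b \<omega> powr p) \<partial>M) < \<infinity>"
      by (simp add: less_top[symmetric] infinity_ennreal_def)
    thus ?thesis by (simp add: ennreal_mult_eq_top_iff less_top[symmetric] infinity_ennreal_def)
  qed
  finally show ?thesis .
qed

theorem corollary7p2: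
  fixes M :: "'w measure" and S :: "real \<Rightarrow> 'w \<Rightarrow> real" and \<alpha> :: real
    and j :: nat and lam :: "nat \<Rightarrow> real" and \<theta> :: "nat \<Rightarrow> real^'d"
  assumes "stable_subordinator M S (\<alpha> / 2)"
    and "j \<ge> 2"
    and "lam \<in> I_set j"
  shows "(CARD('d) = 1 \<and> 1/2 < \<alpha> \<and> \<alpha> < 2 \<longrightarrow>
           (\<integral>\<^sup>+ \<omega>. ennreal (S 1 \<omega> powr (-1/2) * Lalpha S j lam \<theta> \<omega>) \<partial>M) < \<infinity>)
       \<and> ((CARD('d) = 1 \<and> 3/2 < \<alpha> \<and> \<alpha> < 2) \<or> (CARD('d) = 2 \<and> 1 < \<alpha> \<and> \<alpha> < 2)
            \<or> (CARD('d) = 3 \<and> 1/2 < \<alpha> \<and> \<alpha> < 2) \<longrightarrow>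
           (\<integral>\<^sup>+ \<omega>. ennreal (S 1 \<omega> powr (- real CARD('d) / 2) * (Lalpha S j lam \<theta> \<omega>)\<^sup>2) \<partial>M) < \<infinity>)"
proof -
  note SS = assms(1)[unfolded stable_subordinator_def]
  have P: "prob_space M" using SS by blast
  interpret prob_space M by (rule P)
  have meas: "\<And>t. t \<ge> 0 \<Longrightarrow> S t \<in> borel_measurable M" using SS by blast
  have S00: "\<And>\<omega>. \<omega> \<in> space M \<Longrightarrow> S 0 \<omega> = 0" using SS by blast
  have mono: "\<And>\<omega>. \<omega> \<in> space M \<Longrightarrow> mono_on {0..} (\<lambda>t. S t \<omega>)" using SS by blast
  have stat: "\<And>s t. 0 \<le> s \<Longrightarrow> s \<le> t \<Longrightarrow> distr M borel (\<lambda>\<omega>. S t \<omega> - S s \<omega>) = distr M borel (S (t - s))"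
    using SS by blast
  have indep: "\<And>n \<tau>. 0 \<le> \<tau> 0 \<Longrightarrow> (\<forall>i<n. \<tau> i \<le> \<tau> (Suc i)) \<Longrightarrow>
        indep_vars (\<lambda>_. borel) (\<lambda>i \<omega>. S (\<tau> (Suc i)) \<omega> - S (\<tau> i) \<omega>) {..<n}"
    using SS by blast
  have lap: "\<And>t l. t \<ge> 0 \<Longrightarrow> l \<ge> 0 \<Longrightarrow> expectation (\<lambda>\<omega>. exp (- l * S t \<omega>)) = exp (- t * l powr (\<alpha>/2))"
    using SS by blast
  have lj: "0 < lam j" and l1: "lam 1 < 1" and dec: "\<And>k. k \<in> {1..<j} \<Longrightarrow> lam (Suc k) < lam k"
    using assms(3) unfolding I_set_def by auto
  have j2: "2 \<le> j" by (rule assms(2))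

  define \<tau> where "\<tau> i = (if i = 0 then 0 else if i < j then lam (j - i) - lam j else 1)" for i
  have \<tau>mono: "\<tau> i \<le> \<tau> (Suc i)" if "i < j" for i
  proof (cases "Suc i < j")
    case True
    show ?thesis
    proof (cases "i = 0")
      case True
      have "lam (Suc (j - 1)) < lam (j - 1)" using dec[of "j - 1"] j2 by auto
      hence "lam j < lam (j - 1)" using j2 by (simp add: Suc_diff_1)
      thus ?thesis using True \<open>Suc i < j\<close> unfolding \<tau>_def by simp
    next
      case False
      have "lam (Suc (j - Suc i)) < lam (j - Suc i)" using dec[of "j - Suc i"] True by auto
      moreover have "Suc (j - Suc i) = j - i" using True by simp
      ultimately show ?thesis using False True that unfolding \<tau>_def by simp
    qed
  next
    case False
    hence "Suc i = j" using that by simp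
    hence "i \<noteq> 0" "j - i = 1" using j2 by auto
    thus ?thesis using \<open>Suc i = j\<close> that lj l1 unfolding \<tau>_def by simp
  qed
  have \<tau>0: "0 \<le> \<tau> i" if "i \<le> j" for i
    using that
  proof (induction i)
    case 0 thus ?case by (simp add: \<tau>_def)
  next
    case (Suc i) thus ?case using \<tau>mono[of i] by simp
  qed
  have \<tau>j: "\<tau> j = 1" using j2 by (simp add: \<tau>_def)
  have \<tau>z: "\<tau> 0 = 0" by (simp add: \<tau>_def)

  define x where "x i \<omega> = S (\<tau> (Suc i)) \<omega> - S (\<tau> i) \<omega>" for i \<omega>
  have xm: "x i \<in> borel_measurable M" if "i < j" for i
  proof -
    have "S (\<tau> (Suc i)) \<in> borel_measurable M" "S (\<tau> i) \<in> borel_measurable M"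
      using meas \<tau>0 that by auto
    thus ?thesis unfolding x_def by measurable
  qed
  have x0: "0 \<le> x i \<omega>" if "i < j" "\<omega> \<in> space M" for i \<omega>
  proof -
    have "S (\<tau> i) \<omega> \<le> S (\<tau> (Suc i)) \<omega>"
      using mono[OF that(2)] \<tau>0[of i] \<tau>0[of "Suc i"] \<tau>mono[OF that(1)] that(1)
      by (auto elim!: mono_onD)
    thus ?thesis unfolding x_def by simp
  qed
  have xsum: "(\<Sum>i<j. x i \<omega>) = S 1 \<omega>" if "\<omega> \<in> space M" for \<omega>
    unfolding x_def using sum_lessThan_telescope[of "\<lambda>n. S (\<tau> n) \<omega>" j] \<tau>j \<tau>z S00[OF that] by simp

  have moment: "(\<integral>\<^sup>+\<omega>. ennreal (x i \<omega> powr q) \<partial>M) < \<infinity>" if "i < j" "0 < q" "q < \<alpha>/2" for i q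
  proof -
    define t where "t = \<tau> (Suc i) - \<tau> i"
    have t0: "0 \<le> t" unfolding t_def using \<tau>mono[OF that(1)] by simp
    have "(\<integral>\<^sup>+\<omega>. ennreal (x i \<omega> powr q) \<partial>M) = (\<integral>\<^sup>+y. ennreal (y powr q) \<partial>distr M borel (x i))"
      by (rule nn_integral_distr[symmetric]) (use xm[OF that(1)] in auto)
    also have "distr M borel (x i) = distr M borel (S t)"
      unfolding x_def t_def by (rule stat) (use \<tau>0 \<tau>mono that in auto)
    also have "(\<integral>\<^sup>+y. ennreal (y powr q) \<partial>distr M borel (S t)) = (\<integral>\<^sup>+\<omega>. ennreal (S t \<omega> powr q) \<partial>M)"
      by (rule nn_integral_distr) (use meas t0 in auto)
    also have "\<dots> < \<infinity>"
    proof (rule moment_finite[OF P])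
      show "S t \<in> borel_measurable M" using meas t0 by auto
      show "0 \<le> S t \<omega>" if "\<omega> \<in> space M" for \<omega>
      proof -
        have "S 0 \<omega> \<le> S t \<omega>" using mono[OF that] t0 by (auto elim!: mono_onD)
        thus ?thesis using S00[OF that] by simp
      qed
      show "expectation (\<lambda>\<omega>. exp (- l * S t \<omega>)) = exp (- t * l powr (\<alpha>/2))" if "l \<ge> 0" for l
        using lap t0 that by auto
    qed (use t0 that in auto)
    finally show ?thesis .
  qed
  have pairfin: "(\<integral>\<^sup>+\<omega>. ennreal (x a \<omega> powr q) * ennreal (x b \<omega> powr q) \<partial>M) < \<infinity>"
    if ab: "a < j" "b < j" "a \<noteq> b" and q: "0 < q" "q < \<alpha>/2" for a b q
  proof -
    have I: "indep_vars (\<lambda>_. borel) x {..<j}"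
      unfolding x_def by (rule indep) (use \<tau>mono \<tau>z in auto)
    have I2: "indep_vars (\<lambda>_. borel) (\<lambda>i \<omega>. ennreal (x i \<omega> powr q)) {a, b}"
      by (rule indep_vars_compose2[OF indep_vars_subset[OF I]]) (use ab in auto)
    have "(\<integral>\<^sup>+\<omega>. (\<Prod>i\<in>{a,b}. ennreal (x i \<omega> powr q)) \<partial>M) = (\<Prod>i\<in>{a,b}. \<integral>\<^sup>+\<omega>. ennreal (x i \<omega> powr q) \<partial>M)"
      by (rule indep_vars_nn_integral[OF _ I2]) auto
    hence "(\<integral>\<^sup>+\<omega>. ennreal (x a \<omega> powr q) * ennreal (x b \<omega> powr q) \<partial>M)
       = (\<integral>\<^sup>+\<omega>. ennreal (x a \<omega> powr q) \<partial>M) * (\<integral>\<^sup>+\<omega>. ennreal (x b \<omega> powr q) \<partial>M)"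
      using ab by simp
    also have "\<dots> < \<infinity>" using moment[OF ab(1) q] moment[OF ab(2) q]
      by (simp add: ennreal_mult_eq_top_iff less_top[symmetric] infinity_ennreal_def)
    finally show ?thesis .
  qed

  define h where "h i = (if Suc i < j then gam \<theta> (j - Suc i) else 0)" for i
  define G where "G = (\<Sum>k\<in>{1..<j}. (norm (gam \<theta> k))\<^sup>2)"
  have G0: "0 \<le> G" unfolding G_def by (intro sum_nonneg) auto
  have hG: "(norm (h i))\<^sup>2 \<le> G" for i
  proof (cases "Suc i < j")
    case True
    have "(norm (gam \<theta> (j - Suc i)))\<^sup>2 \<le> G"
      unfolding G_def by (rule member_le_sum) (use True in auto)
    thus ?thesis using True by (simp add: h_def)
  qed (use G0 in \<open>simp add: h_def\<close>)
  have Sstar_x: "Sstar S j lam (j - Suc i) \<omega> = x i \<omega>" if "Suc i < j" for i \<omega>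
  proof -
    have a: "\<tau> (Suc i) = lam (j - Suc i) - lam j" using that unfolding \<tau>_def by simp
    have b: "\<tau> i = lam (Suc (j - Suc i)) - lam j"
    proof (cases "i = 0")
      case True thus ?thesis using that by (simp add: \<tau>_def Suc_diff_Suc)
    next
      case False
      have "Suc (j - Suc i) = j - i" using that by simp
      thus ?thesis using False that by (simp add: \<tau>_def)
    qed
    show ?thesis unfolding Sstar_def x_def a b ..
  qed
  have Lform: "Lalpha S j lam \<theta> \<omega> = (\<Sum>i\<in>{..<j}. x i \<omega> * (norm (h i))\<^sup>2)
        - inverse (\<Sum>i\<in>{..<j}. x i \<omega>) * (norm (\<Sum>i\<in>{..<j}. x i \<omega> *\<^sub>R h i))\<^sup>2"
    if \<omega>: "\<omega> \<in> space M" for \<omega>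
  proof -
    have e1: "(\<Sum>k=1..<j. Sstar S j lam k \<omega> * (norm (gam \<theta> k))\<^sup>2) = (\<Sum>i<j. x i \<omega> * (norm (h i))\<^sup>2)"
      unfolding reidx by (intro sum.cong refl) (simp add: Sstar_x h_def)
    have e2: "(\<Sum>k=1..<j. Sstar S j lam k \<omega> *\<^sub>R gam \<theta> k) = (\<Sum>i<j. x i \<omega> *\<^sub>R h i)"
      unfolding reidx by (intro sum.cong refl) (simp add: Sstar_x h_def)
    show ?thesis unfolding Lalpha_def e1 e2 xsum[OF \<omega>] ..
  qed
  have core: "0 \<le> Lalpha S j lam \<theta> \<omega> \<and> S 1 \<omega> * Lalpha S j lam \<theta> \<omega>
      \<le> 2 * G * (\<Sum>a<j. \<Sum>b<j. if a = b then 0 else x a \<omega> * x b \<omega>)"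
    if \<omega>: "\<omega> \<in> space M" for \<omega>
    by (rule core_bound[where I="{..<j}" and h=h]) (use x0 \<omega> hG Lform[OF \<omega>] xsum[OF \<omega>] in auto)

  show ?thesis
  proof (intro conjI impI)
    assume H: "CARD('d) = 1 \<and> 1/2 < \<alpha> \<and> \<alpha> < 2"
    have "(\<integral>\<^sup>+ \<omega>. ennreal (S 1 \<omega> powr (-1/2) * Lalpha S j lam \<theta> \<omega>) \<partial>M)
        \<le> (\<integral>\<^sup>+\<omega>. ennreal (2 * G * (\<Sum>a<j. \<Sum>b<j. if a = b then 0 else x a \<omega> powr (1/4) * x b \<omega> powr (1/4))) \<partial>M)"
    proof (rule nn_integral_mono)
      fix \<omega> assume \<omega>: "\<omega> \<in> space M"
      show "ennreal (S 1 \<omega> powr (-1/2) * Lalpha S j lam \<theta> \<omega>)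
          \<le> ennreal (2 * G * (\<Sum>a<j. \<Sum>b<j. if a = b then 0 else x a \<omega> powr (1/4) * x b \<omega> powr (1/4)))"
        by (intro ennreal_leI pw_bound1[where I="{..<j}" and x="\<lambda>i. x i \<omega>"])
           (use x0 \<omega> xsum[OF \<omega>] G0 core[OF \<omega>] in auto)
    qed
    also have "\<dots> < \<infinity>"
      by (rule pair_sum_finite) (use xm G0 pairfin H in auto)
    finally show "(\<integral>\<^sup>+ \<omega>. ennreal (S 1 \<omega> powr (-1/2) * Lalpha S j lam \<theta> \<omega>) \<partial>M) < \<infinity>" .
  next
    assume H: "(CARD('d) = 1 \<and> 3/2 < \<alpha> \<and> \<alpha> < 2) \<or> (CARD('d) = 2 \<and> 1 < \<alpha> \<and> \<alpha> < 2)
            \<or> (CARD('d) = 3 \<and> 1/2 < \<alpha> \<and> \<alpha> < 2)"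
    define dd where "dd = real CARD('d)"
    define p where "p = (4 - dd) / 4"
    have dd: "0 \<le> dd" "dd < 4" using H unfolding dd_def by auto
    have p: "0 < p" "p < \<alpha>/2" using H unfolding p_def dd_def by auto
    have "(\<integral>\<^sup>+ \<omega>. ennreal (S 1 \<omega> powr (- real CARD('d) / 2) * (Lalpha S j lam \<theta> \<omega>)\<^sup>2) \<partial>M)
        \<le> (\<integral>\<^sup>+\<omega>. ennreal (4 * G\<^sup>2 * real (card {..<j} * card {..<j}) *
             (\<Sum>a<j. \<Sum>b<j. if a = b then 0 else x a \<omega> powr p * x b \<omega> powr p)) \<partial>M)"
    proof (rule nn_integral_mono)
      fix \<omega> assume \<omega>: "\<omega> \<in> space M"
      show "ennreal (S 1 \<omega> powr (- real CARD('d) / 2) * (Lalpha S j lam \<theta> \<omega>)\<^sup>2)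
          \<le> ennreal (4 * G\<^sup>2 * real (card {..<j} * card {..<j}) *
             (\<Sum>a<j. \<Sum>b<j. if a = b then 0 else x a \<omega> powr p * x b \<omega> powr p))"
        unfolding p_def dd_def[symmetric]
        by (intro ennreal_leI pw_bound2[where I="{..<j}" and x="\<lambda>i. x i \<omega>"])
           (use x0 \<omega> xsum[OF \<omega>] G0 core[OF \<omega>] dd in auto)
    qed
    also have "\<dots> < \<infinity>"
      by (rule pair_sum_finite) (use xm G0 pairfin p in auto)
    finally show "(\<integral>\<^sup>+ \<omega>. ennreal (S 1 \<omega> powr (- real CARD('d) / 2) * (Lalpha S j lam \<theta> \<omega>)\<^sup>2) \<partial>M) < \<infinity>" .
  qed
qed

end
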